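(* In the setting described in the context, under $H_0$ and hypotheses (i)–(v) listed there, for every $\epsilon>0$, $$\sup_{\mathbf C}P\Big(\Big|\frac{S_V(\mathbf C)}{\sqrt n\,\mathrm{sd}}\Big|\ge\epsilon\Big)\to0\quad(n\to\infty).$$
   Context: Observations $(Y_i,\mathbf X_i,\mathbf Z_i)$, $i=1,\dots,n$, are i.i.d. with $\mathbf X\in\mathbb R^r,\mathbf Z\in\mathbb R^s$, $Y=m(\mathbf X,\mathbf Z)+\sigma(\mathbf X,\mathbf Z)\epsilon$, $\epsilon$ with mean zero and constant variance independent of $(\mathbf X,\mathbf Z)$; $H_0:m(\mathbf x,\mathbf z)=m_1(\mathbf x)$. Let $\xi_i=Y_i-m_1(\mathbf X_i)$. Hypotheses: (i) the densities of $\mathbf X$ and $\mathbf Z$ are bounded away from zero; (ii) the $(q+1)$-th derivatives of $m_1$ are uniformly continuous and bounded; (iii) $\sigma^2(\cdot,\mathbf z):=E(\xi^2\mid\mathbf Z^T\mathbf C)$ is Lipschitz continuous; (iv) $\sup\sigma^2<\infty$ and $E\epsilon^4<\infty$; (v) a bandwidth matrix $H_n^{1/2}$ has eigenvalues $\lambda_1,\dots,\lambda_r\to0$ at the same rate with $n\lambda_i^{4(q+1)}\to0$, $n\lambda_i^{2r}/(\log n)^2\to\infty$. $\tau=\int\big[\int\sigma^2(\mathbf x,\mathbf z)f_{\mathbf X\mid\mathbf Z^T\mathbf C=\mathbf z^T\mathbf C}(\mathbf x)d\mathbf x\big]^2 f_{\mathbf Z^T\mathbf C}(\mathbf z^T\mathbf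 C)\,d(\mathbf z^T\mathbf C)$ and $\mathrm{sd}=\sqrt{\frac{2p(2p-1)}{3(p-1)}\tau^2}$. For $\mathbf C\in\mathbb R^s$, with data ordered by $P_i=\mathbf Z_i^T\mathbf C$, let $\hat F_P$ be the empirical distribution function of the $P_i$ and $W_i(\mathbf C)=\{j:|\hat F_P(P_j)-\hat F_P(P_i)|\le(p-1)/(2n)\}$, $p\ge3$ a fixed odd integer. Define $\gamma_i(\mathbf C)=\frac{1}{p-1}\sum_{j_1\ne j_2}\xi_{j_1}\xi_{j_2}I(j_1,j_2\in W_i(\mathbf C))$. Let $b_n\sim n^{2/3}$ and $r_n\sim n/b_n\sim n^{1/3}$, and for $i=1,\dots,r_n$ set $U_i(\mathbf C)=\sum_{k=1}^{b_n}\gamma_{(i-1)(b_n+p)+k}(\mathbf C)$, $V_i(\mathbf C)=\sum_{k=b_n+1}^{b_n+p}\gamma_{(i-1)(b_n+p)+k}(\mathbf C)$, $S_U(\mathbf C)=\sum_{i=1}^{r_n}U_i(\mathbf C)$, $S_V(\mathbf C)=\sum_{i=1}^{r_n}V_i(\mathbf C)$. *)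

theory Defs
  imports "HOL-Probability.Probability" "HOL-Library.Landau_Symbols"
begin

definition partial_dir :: "'r::finite \<Rightarrow> (real^'r \<Rightarrow> real) \<Rightarrow> real^'r \<Rightarrow> real" where
  "partial_dir i f x = deriv (\<lambda>t. f (x + t *\<^sub>R axis i 1)) 0"

fun iter_partial :: "'r::finite list \<Rightarrow> (real^'r \<Rightarrow> real) \<Rightarrow> real^'r \<Rightarrow> real" where
  "iter_partial [] f = f"
| "iter_partial (i # is) f = partial_dir i (iter_partial is f)"

definition derivs_bdd_ucont :: "nat \<Rightarrow> (real^'r::finite \<Rightarrow> real) \<Rightarrow> bool" where
  "derivs_bdd_ucont k f \<longleftrightarrow>
     (\<forall>is i x. length is < k \<longrightarrow>
        (\<lambda>t. iter_partial is f (x + t *\<^sub>R axis i 1)) differentiable (at 0)) \<and>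
     (\<forall>is. length is = k \<longrightarrow>
        bounded (range (iter_partial is f)) \<and> uniformly_continuous_on UNIV (iter_partial is f))"

definition Fhat :: "nat \<Rightarrow> (nat \<Rightarrow> real) \<Rightarrow> real \<Rightarrow> real" where
  "Fhat n P t = real (card {k. k < n \<and> P k \<le> t}) / real n"

definition Wnb :: "nat \<Rightarrow> nat \<Rightarrow> (nat \<Rightarrow> real) \<Rightarrow> nat \<Rightarrow> nat set" where
  "Wnb p n P i = {j. j < n \<and> \<bar>Fhat n P (P j) - Fhat n P (P i)\<bar> \<le> (real p - 1) / (2 * real n)}"

definition gam :: "nat \<Rightarrow> nat \<Rightarrow> (nat \<Rightarrow> real) \<Rightarrow> (nat \<Rightarrow> real) \<Rightarrow> nat \<Rightarrow> real" where
  "gam p n P xi i = 1 / (real p - 1) *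
     (\<Sum>j1\<in>Wnb p n P i. \<Sum>j2\<in>Wnb p n P i - {j1}. xi j1 * xi j2)"

text \<open>Position (1..n) of observation i when the data are ordered by P (ties broken by index).\<close>
definition ord_pos :: "nat \<Rightarrow> (nat \<Rightarrow> real) \<Rightarrow> nat \<Rightarrow> nat" where
  "ord_pos n P i = card {j. j < n \<and> (P j < P i \<or> (P j = P i \<and> j \<le> i))}"

text \<open>gamma at order position k (0 if k is not a position 1..n).\<close>
definition gam_ord :: "nat \<Rightarrow> nat \<Rightarrow> (nat \<Rightarrow> real) \<Rightarrow> (nat \<Rightarrow> real) \<Rightarrow> nat \<Rightarrow> real" where
  "gam_ord p n P xi k = (\<Sum>l\<in>{l. l < n \<and> ord_pos n P l = k}. gam p n P xi l)"

text \<open>S_V(C) with block length b = b_n and number of blocks r = r_n.\<close>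
definition S_V :: "nat \<Rightarrow> nat \<Rightarrow> nat \<Rightarrow> nat \<Rightarrow> (nat \<Rightarrow> real) \<Rightarrow> (nat \<Rightarrow> real) \<Rightarrow> real" where
  "S_V p n b r P xi = (\<Sum>i\<in>{1..r}. \<Sum>k\<in>{b+1..b+p}. gam_ord p n P xi ((i - 1) * (b + p) + k))"

definition tau :: "'a measure \<Rightarrow> ('a \<Rightarrow> real^'s::finite) \<Rightarrow> ('a \<Rightarrow> real) \<Rightarrow> real^'s \<Rightarrow> real" where
  "tau M Z xi C = (\<integral>\<omega>. (real_cond_exp M (vimage_algebra (space M) (\<lambda>\<omega>. Z \<omega> \<bullet> C) borel)
                          (\<lambda>\<omega>. (xi \<omega>)\<^sup>2) \<omega>)\<^sup>2 \<partial>M)"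

definition sd :: "nat \<Rightarrow> real \<Rightarrow> real" where
  "sd p t = sqrt (2 * real p * (2 * real p - 1) / (3 * (real p - 1)) * t\<^sup>2)"

end

theory Submission
  imports Defs "HOL-Real_Asymp.Real_Asymp"
begin

definition rk :: "nat \<Rightarrow> (nat \<Rightarrow> real) \<Rightarrow> nat \<Rightarrow> nat" where
  "rk n P j = card {k. k < n \<and> P k \<le> P j}"

lemma rk_lt:
  assumes "P j < P j'" "j' < n"
  shows "rk n P j < rk n P j'"
proof -
  have "{k. k < n \<and> P k \<le> P j} \<subseteq> {k. k < n \<and> P k \<le> P j'}" using assms(1) by auto
  moreover have "j' \<in> {k. k < n \<and> P k \<le> P j'}" using assms(2) by simp
  moreover have "j' \<notin> {k. k < n \<and> P k \<le> P j}" using assms(1) by simp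
  ultimately have "{k. k < n \<and> P k \<le> P j} \<subset> {k. k < n \<and> P k \<le> P j'}" by blast
  then show ?thesis unfolding rk_def by (rule psubset_card_mono[rotated]) simp
qed

lemma rk_inj:
  assumes "inj_on P {..<n}" "j < n" "j' < n" "rk n P j = rk n P j'"
  shows "j = j'"
proof (rule ccontr)
  assume ne: "j \<noteq> j'"
  have "P j \<noteq> P j'"
  proof
    assume "P j = P j'"
    then have "j = j'" using assms(1-3) inj_onD[of P "{..<n}" j j'] by simp
    then show False using ne by simp
  qed
  then consider "P j < P j'" | "P j' < P j" by linarith
  then show False
  proof cases
    case 1
    then show False using rk_lt[OF 1 assms(3)] assms(4) by simp
  next
    case 2
    then show False using rk_lt[OF 2 assms(2)] assms(4) by simp
  qed
qed
lemma a1: "card {c - (p - 1) div 2 .. c + (p - 1) div 2} \<le> (p::nat)" if "p \<noteq> 0"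
proof -
  have "card {c - (p - 1) div 2 .. c + (p - 1) div 2} = Suc (c + (p - 1) div 2) - (c - (p - 1) div 2)" by simp
  also have "\<dots> \<le> p" using that by linarith
  finally show ?thesis .
qed

lemma win_mem:
  assumes h: "\<bar>real m - real c\<bar> \<le> (real p - 1) / 2" and p: "p \<ge> 1"
  shows "m \<in> {c - (p - 1) div 2 .. c + (p - 1) div 2}"
proof -
  have pp: "real p - 1 = real (p - 1)" using p by (simp add: of_nat_diff)
  have h2: "\<bar>real m - real c\<bar> \<le> real (p-1) / 2" using h unfolding pp .
  have "real m \<le> real c + real (p-1) / 2" "real c \<le> real m + real (p-1) / 2" using h2 unfolding abs_le_iff by linarith+
  then have "real (2 * m) \<le> real (2 * c + (p-1))" "real (2 * c) \<le> real (2 * m + (p-1))" by simp_all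
  then have "2 * m \<le> 2 * c + (p-1)" "2 * c \<le> 2 * m + (p-1)" by (simp_all only: of_nat_le_iff)
  then have "m \<le> c + (p - 1) div 2" "c - (p - 1) div 2 \<le> m" by presburger+
  then show ?thesis by simp
qed
lemma card_window:
  assumes "inj_on P {..<n}" and p: "p \<ge> 1"
  shows "card {j. j < n \<and> \<bar>real (rk n P j) - real c\<bar> \<le> (real p - 1) / 2} \<le> p"
proof -
  let ?A = "{j. j < n \<and> \<bar>real (rk n P j) - real c\<bar> \<le> (real p - 1) / 2}"
  let ?h = "(p - 1) div 2"
  have inj: "inj_on (rk n P) ?A" by (auto intro!: inj_onI rk_inj[OF assms(1)])
  have sub: "rk n P ` ?A \<subseteq> {c - ?h .. c + ?h}"
    using win_mem[OF _ p] by blast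
  have "card ?A = card (rk n P ` ?A)" using card_image[OF inj] by simp
  also have "\<dots> \<le> card {c - ?h .. c + ?h}" by (rule card_mono[OF _ sub]) simp
  also have "\<dots> \<le> p" using a1 p by simp
  finally show ?thesis .
qed

definition win :: "nat \<Rightarrow> nat \<Rightarrow> (nat \<Rightarrow> real) \<Rightarrow> nat \<Rightarrow> nat set" where
  "win p n P c = {j. j < n \<and> \<bar>real (rk n P j) - real c\<bar> \<le> (real p - 1) / 2}"

lemma Wnb_win: "Wnb p n P l = win p n P (rk n P l)"
proof (cases "n = 0")
  case True then show ?thesis unfolding Wnb_def win_def by simp
next
  case False
  then have n: "real n > 0" by simp
  have F: "Fhat n P (P j) = real (rk n P j) / real n" for j
    unfolding Fhat_def rk_def by simp
  have "\<bar>a / real n - b / real n\<bar> \<le> (real p - 1) / (2 * real n) \<longleftrightarrow> \<bar>a - b\<bar> \<le> (real p - 1) / 2" for a b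
  proof -
    have "a / real n - b / real n = (a - b) / real n" by (simp add: diff_divide_distrib)
    then have "\<bar>a / real n - b / real n\<bar> = \<bar>a - b\<bar> / real n" using n by simp
    moreover have "(real p - 1) / (2 * real n) = ((real p - 1) / 2) / real n" by simp
    ultimately show ?thesis using n by (simp only: divide_le_cancel) simp
  qed
  then show ?thesis unfolding Wnb_def win_def F by simp
qed

lemma ord_pos_rk:
  assumes inj: "inj_on P {..<n}" and l: "l < n"
  shows "ord_pos n P l = rk n P l"
proof -
  have "{j. j < n \<and> (P j < P l \<or> (P j = P l \<and> j \<le> l))} = {k. k < n \<and> P k \<le> P l}"
  proof (intro set_eqI iffI)
    fix j assume "j \<in> {k. k < n \<and> P k \<le> P l}"
    then have j: "j < n" "P j \<le> P l" by auto
    show "j \<in> {j. j < n \<and> (P j < P l \<or> (P j = P l \<and> j \<le> l))}"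
    proof (cases "P j = P l")
      case True
      then have "j = l" using inj j(1) l inj_onD[of P "{..<n}" j l] by simp
      then show ?thesis using j by simp
    next
      case False then show ?thesis using j by simp
    qed
  qed auto
  then show ?thesis unfolding ord_pos_def rk_def by simp
qed

lemma sum_pairs_le:
  fixes a :: "nat \<Rightarrow> real"
  assumes "finite W"
  shows "\<bar>\<Sum>j1\<in>W. \<Sum>j2\<in>W - {j1}. a j1 * a j2\<bar> \<le> real (card W) * (\<Sum>j\<in>W. (a j)\<^sup>2)"
proof -
  have "\<bar>\<Sum>j1\<in>W. \<Sum>j2\<in>W - {j1}. a j1 * a j2\<bar> \<le> (\<Sum>j1\<in>W. \<Sum>j2\<in>W - {j1}. \<bar>a j1 * a j2\<bar>)"
    by (rule order_trans[OF sum_abs]) (intro sum_mono sum_abs)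
  also have "\<dots> \<le> (\<Sum>j1\<in>W. \<Sum>j2\<in>W. \<bar>a j1 * a j2\<bar>)"
    using assms by (intro sum_mono sum_mono2) auto
  also have "\<dots> \<le> (\<Sum>j1\<in>W. \<Sum>j2\<in>W. ((a j1)\<^sup>2 + (a j2)\<^sup>2) / 2)"
  proof (intro sum_mono)
    fix j1 j2
    have "0 \<le> (\<bar>a j1\<bar> - \<bar>a j2\<bar>)\<^sup>2" by simp
    then have "2 * (\<bar>a j1\<bar> * \<bar>a j2\<bar>) \<le> \<bar>a j1\<bar>\<^sup>2 + \<bar>a j2\<bar>\<^sup>2" by (simp add: power2_diff)
    then show "\<bar>a j1 * a j2\<bar> \<le> ((a j1)\<^sup>2 + (a j2)\<^sup>2) / 2" by (simp add: abs_mult)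
  qed
  also have "\<dots> = (\<Sum>j1\<in>W. \<Sum>j2\<in>W. (a j1)\<^sup>2 / 2) + (\<Sum>j1\<in>W. \<Sum>j2\<in>W. (a j2)\<^sup>2 / 2)"
    by (simp add: add_divide_distrib sum.distrib)
  also have "\<dots> = real (card W) * (\<Sum>j\<in>W. (a j)\<^sup>2)"
    by (simp add: sum_divide_distrib[symmetric] sum_distrib_left[symmetric] sum_distrib_right[symmetric] algebra_simps)
  finally show ?thesis .
qed

lemma aux_cancel: "x > 0 \<Longrightarrow> 2 * x * Q / x = 2 * (Q::real)" by simp

lemma gam_bound:
  assumes "card (Wnb p n P l) \<le> p" and p: "p \<ge> 3"
  shows "\<bar>gam p n P xi l\<bar> \<le> 2 * (\<Sum>j\<in>Wnb p n P l. (xi j)\<^sup>2)"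
proof -
  let ?W = "Wnb p n P l"
  have fin: "finite ?W" unfolding Wnb_def by simp
  have p1: "real p - 1 > 0" using p by simp
  have S: "0 \<le> (\<Sum>j\<in>?W. (xi j)\<^sup>2)" by (simp add: sum_nonneg)
  have "\<bar>gam p n P xi l\<bar> = \<bar>\<Sum>j1\<in>?W. \<Sum>j2\<in>?W - {j1}. xi j1 * xi j2\<bar> / (real p - 1)"
    unfolding gam_def using p1 by (simp add: abs_mult)
  also have "\<dots> \<le> real (card ?W) * (\<Sum>j\<in>?W. (xi j)\<^sup>2) / (real p - 1)"
    using p1 by (intro divide_right_mono sum_pairs_le fin) auto
  also have "\<dots> \<le> real p * (\<Sum>j\<in>?W. (xi j)\<^sup>2) / (real p - 1)"
    using p1 assms(1) S by (intro divide_right_mono mult_right_mono) auto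
  also have "\<dots> \<le> 2 * (\<Sum>j\<in>?W. (xi j)\<^sup>2)"
  proof -
    have "real p \<le> 2 * (real p - 1)" using p by simp
    then have "real p * (\<Sum>j\<in>?W. (xi j)\<^sup>2) \<le> 2 * (real p - 1) * (\<Sum>j\<in>?W. (xi j)\<^sup>2)"
      using S by (rule mult_right_mono)
    then have "real p * (\<Sum>j\<in>?W. (xi j)\<^sup>2) / (real p - 1) \<le> 2 * (real p - 1) * (\<Sum>j\<in>?W. (xi j)\<^sup>2) / (real p - 1)"
      using p1 by (intro divide_right_mono) auto
    also have "\<dots> = 2 * (\<Sum>j\<in>?W. (xi j)\<^sup>2)" using p1 aux_cancel by blast
    finally show ?thesis .
  qed
  finally show ?thesis .
qed

lemma gam_ord_bound:
  assumes inj: "inj_on P {..<n}" and p: "p \<ge> 3"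
  shows "\<bar>gam_ord p n P xi c\<bar> \<le> 2 * (\<Sum>j\<in>win p n P c. (xi j)\<^sup>2)"
proof -
  let ?L = "{l. l < n \<and> ord_pos n P l = c}"
  have S: "0 \<le> (\<Sum>j\<in>win p n P c. (xi j)\<^sup>2)" by (simp add: sum_nonneg)
  show ?thesis
  proof (cases "?L = {}")
    case True
    then have "gam_ord p n P xi c = 0" unfolding gam_ord_def by (simp only: sum.empty)
    then show ?thesis using S by simp
  next
    case False
    then obtain l where l: "l < n" "ord_pos n P l = c" by auto
    then have rl: "rk n P l = c" using ord_pos_rk[OF inj] by simp
    have "?L = {l}"
    proof (intro set_eqI iffI)
      fix l' assume "l' \<in> ?L"
      then have "l' < n" "rk n P l' = c" using ord_pos_rk[OF inj] by auto
      then show "l' \<in> {l}" using rk_inj[OF inj l(1), of l'] rl by simp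
    qed (use l in simp)
    then have "gam_ord p n P xi c = gam p n P xi l" unfolding gam_ord_def by simp
    moreover have W: "Wnb p n P l = win p n P c" using Wnb_win rl by simp
    moreover have "card (Wnb p n P l) \<le> p" unfolding W win_def
      using card_window[OF inj] p by simp
    ultimately show ?thesis using gam_bound[OF _ p, of n P l xi] W by simp
  qed
qed

lemma sum_win: "(\<Sum>j\<in>win p n P c. f j) = (\<Sum>j<n. if \<bar>real (rk n P j) - real c\<bar> \<le> (real p - 1) / 2 then f j else 0)"
proof -
  have "win p n P c = {j\<in>{..<n}. \<bar>real (rk n P j) - real c\<bar> \<le> (real p - 1) / 2}"
    unfolding win_def by auto
  then show ?thesis by (simp only: sum.inter_filter[OF finite_lessThan])
qed

lemma SV_bound:
  assumes inj: "inj_on P {..<n}" and p: "p \<ge> 3"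
  shows "\<bar>S_V p n b r P xi\<bar> \<le> 2 * (\<Sum>i\<in>{1..r}. \<Sum>k\<in>{b+1..b+p}. \<Sum>j<n.
     (if \<bar>real (rk n P j) - real ((i - 1) * (b + p) + k)\<bar> \<le> (real p - 1) / 2 then (xi j)\<^sup>2 else 0))"
proof -
  have "\<bar>S_V p n b r P xi\<bar> \<le> (\<Sum>i\<in>{1..r}. \<Sum>k\<in>{b+1..b+p}. \<bar>gam_ord p n P xi ((i - 1) * (b + p) + k)\<bar>)"
    unfolding S_V_def by (rule order_trans[OF sum_abs]) (intro sum_mono sum_abs)
  also have "\<dots> \<le> (\<Sum>i\<in>{1..r}. \<Sum>k\<in>{b+1..b+p}. 2 * (\<Sum>j\<in>win p n P ((i - 1) * (b + p) + k). (xi j)\<^sup>2))"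
    by (intro sum_mono gam_ord_bound[OF inj p])
  also have "\<dots> = 2 * (\<Sum>i\<in>{1..r}. \<Sum>k\<in>{b+1..b+p}. \<Sum>j<n.
     (if \<bar>real (rk n P j) - real ((i - 1) * (b + p) + k)\<bar> \<le> (real p - 1) / 2 then (xi j)\<^sup>2 else 0))"
    by (simp add: sum_win sum_distrib_left)
  finally show ?thesis .
qed

lemma fst_borel[measurable]: "(fst :: ('a::second_countable_topology \<times> 'b::second_countable_topology) \<Rightarrow> 'a) \<in> borel \<rightarrow>\<^sub>M borel"
  by (subst borel_prod[symmetric]) (rule measurable_fst)
lemma snd_borel[measurable]: "(snd :: ('a::second_countable_topology \<times> 'b::second_countable_topology) \<Rightarrow> 'b) \<in> borel \<rightarrow>\<^sub>M borel"
  by (subst borel_prod[symmetric]) (rule measurable_snd)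

locale S0 = prob_space M for M :: "'a measure" +
  fixes X :: "nat \<Rightarrow> 'a \<Rightarrow> real^'r" and Z :: "nat \<Rightarrow> 'a \<Rightarrow> real^'s" and eps :: "nat \<Rightarrow> 'a \<Rightarrow> real"
  assumes measX[measurable]: "\<And>i. X i \<in> borel_measurable M"
    and measZ[measurable]: "\<And>i. Z i \<in> borel_measurable M"
    and measE[measurable]: "\<And>i. eps i \<in> borel_measurable M"
    and indep: "indep_vars (\<lambda>_. borel) (\<lambda>i \<omega>. (X i \<omega>, Z i \<omega>, eps i \<omega>)) UNIV"
    and ident: "\<And>i. distr M borel (\<lambda>\<omega>. (X i \<omega>, Z i \<omega>, eps i \<omega>))
                    = distr M borel (\<lambda>\<omega>. (X 0 \<omega>, Z 0 \<omega>, eps 0 \<omega>))"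
    and eps_indep: "distr M (borel \<Otimes>\<^sub>M borel) (\<lambda>\<omega>. ((X 0 \<omega>, Z 0 \<omega>), eps 0 \<omega>))
                       = distr M borel (\<lambda>\<omega>. (X 0 \<omega>, Z 0 \<omega>)) \<Otimes>\<^sub>M distr M borel (eps 0)"
begin

definition T :: "nat \<Rightarrow> 'a \<Rightarrow> (real^'r) \<times> (real^'s) \<times> real" where
  "T i \<omega> = (X i \<omega>, Z i \<omega>, eps i \<omega>)"

lemma measT[measurable]: "T i \<in> borel_measurable M"
  unfolding T_def by measurable

abbreviation "\<mu>T \<equiv> distr M borel (T 0)"

lemma inner:
  assumes f[measurable]: "f \<in> borel_measurable (borel :: (real^'s) measure)"
  shows "(\<integral>\<^sup>+t. f (fst (snd t)) * ennreal ((snd (snd t))\<^sup>2) \<partial>\<mu>T)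
       = (\<integral>\<^sup>+t. f (fst (snd t)) \<partial>\<mu>T) * (\<integral>\<^sup>+\<omega>. ennreal ((eps 0 \<omega>)\<^sup>2) \<partial>M)"
proof -
  let ?XZ = "distr M borel (\<lambda>\<omega>. (X 0 \<omega>, Z 0 \<omega>))"
  let ?E = "distr M borel (eps 0)"
  interpret XZ: prob_space ?XZ by (rule prob_space_distr) measurable
  interpret E: prob_space ?E by (rule prob_space_distr) measurable
  interpret P: pair_prob_space ?XZ ?E ..
  have "(\<integral>\<^sup>+t. f (fst (snd t)) * ennreal ((snd (snd t))\<^sup>2) \<partial>\<mu>T)
      = (\<integral>\<^sup>+\<omega>. f (Z 0 \<omega>) * ennreal ((eps 0 \<omega>)\<^sup>2) \<partial>M)"
    by (subst nn_integral_distr) (simp_all add: T_def)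
  also have "\<dots> = (\<integral>\<^sup>+x. f (snd (fst x)) * ennreal ((snd x)\<^sup>2)
        \<partial>distr M (borel \<Otimes>\<^sub>M borel) (\<lambda>\<omega>. ((X 0 \<omega>, Z 0 \<omega>), eps 0 \<omega>)))"
    by (subst nn_integral_distr) simp_all
  also have "\<dots> = (\<integral>\<^sup>+x. f (snd (fst x)) * ennreal ((snd x)\<^sup>2) \<partial>(?XZ \<Otimes>\<^sub>M ?E))"
    unfolding eps_indep ..
  also have "\<dots> = (\<integral>\<^sup>+xz. \<integral>\<^sup>+e. f (snd xz) * ennreal (e\<^sup>2) \<partial>?E \<partial>?XZ)"
    by (subst E.nn_integral_fst[symmetric]) simp_all
  also have "\<dots> = (\<integral>\<^sup>+xz. f (snd xz) * (\<integral>\<^sup>+e. ennreal (e\<^sup>2) \<partial>?E) \<partial>?XZ)"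
    by (subst nn_integral_cmult) simp_all
  also have "\<dots> = (\<integral>\<^sup>+xz. f (snd xz) \<partial>?XZ) * (\<integral>\<^sup>+e. ennreal (e\<^sup>2) \<partial>?E)"
    by (subst nn_integral_multc) simp_all
  also have "(\<integral>\<^sup>+xz. f (snd xz) \<partial>?XZ) = (\<integral>\<^sup>+t. f (fst (snd t)) \<partial>\<mu>T)"
    by (simp add: nn_integral_distr T_def)
  also have "(\<integral>\<^sup>+e. ennreal (e\<^sup>2) \<partial>?E) = (\<integral>\<^sup>+\<omega>. ennreal ((eps 0 \<omega>)\<^sup>2) \<partial>M)"
    by (simp add: nn_integral_distr)
  finally show ?thesis .
qed

abbreviation "R B \<omega> \<equiv> restrict (\<lambda>i. T i \<omega>) B"

lemma indep_T: "indep_vars (\<lambda>_. borel) T UNIV"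
proof -
  have "T = (\<lambda>i \<omega>. (X i \<omega>, Z i \<omega>, eps i \<omega>))" by (simp add: T_def[abs_def])
  then show ?thesis using indep by simp
qed

lemma indep_TR:
  assumes "j \<notin> B"
  shows "indep_var (PiM {j} (\<lambda>_. borel)) (R {j}) (PiM B (\<lambda>_. borel)) (R B)"
  using assms by (intro indep_var_restrict[OF indep_T]) auto

lemma mR[measurable]: "R B \<in> M \<rightarrow>\<^sub>M PiM B (\<lambda>_. borel)"
  by (intro measurable_restrict) simp

lemma fubini_TR:
  assumes B: "j \<notin> B" and H[measurable]: "H \<in> borel_measurable (borel \<Otimes>\<^sub>M PiM B (\<lambda>_. borel))"
  shows "(\<integral>\<^sup>+\<omega>. H (T j \<omega>, R B \<omega>) \<partial>M)
      = (\<integral>\<^sup>+r. \<integral>\<^sup>+t. H (t, r) \<partial>\<mu>T \<partial>distr M (PiM B (\<lambda>_. borel)) (R B))"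
proof -
  let ?R = "distr M (PiM B (\<lambda>_. borel)) (R B)"
  let ?J = "distr M (PiM {j} (\<lambda>_. borel)) (R {j})"
  interpret JJ: prob_space ?J by (rule prob_space_distr) measurable
  interpret RR: prob_space ?R by (rule prob_space_distr) measurable
  interpret P: pair_prob_space ?J ?R ..
  have D: "distr M (PiM {j} (\<lambda>_. borel) \<Otimes>\<^sub>M PiM B (\<lambda>_. borel)) (\<lambda>\<omega>. (R {j} \<omega>, R B \<omega>)) = ?J \<Otimes>\<^sub>M ?R"
    using indep_TR[OF B] by (simp add: indep_var_distribution_eq)
  have mj[measurable]: "(\<lambda>f. f j) \<in> PiM {j} (\<lambda>_. borel) \<rightarrow>\<^sub>M (borel :: ((real^'r) \<times> (real^'s) \<times> real) measure)"
    by (rule measurable_component_singleton) simp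
  have "(\<integral>\<^sup>+\<omega>. H (T j \<omega>, R B \<omega>) \<partial>M) = (\<integral>\<^sup>+\<omega>. (\<lambda>(f, r). H (f j, r)) (R {j} \<omega>, R B \<omega>) \<partial>M)"
    by simp
  also have "\<dots> = (\<integral>\<^sup>+x. (\<lambda>(f, r). H (f j, r)) x \<partial>distr M (PiM {j} (\<lambda>_. borel) \<Otimes>\<^sub>M PiM B (\<lambda>_. borel)) (\<lambda>\<omega>. (R {j} \<omega>, R B \<omega>)))"
    by (subst nn_integral_distr) simp_all
  also have "\<dots> = (\<integral>\<^sup>+x. (\<lambda>(f, r). H (f j, r)) x \<partial>(?J \<Otimes>\<^sub>M ?R))" unfolding D ..
  also have "\<dots> = (\<integral>\<^sup>+r. \<integral>\<^sup>+f. H (f j, r) \<partial>?J \<partial>?R)"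
    by (subst P.nn_integral_snd[symmetric]) simp_all
  also have "\<dots> = (\<integral>\<^sup>+r. \<integral>\<^sup>+t. H (t, r) \<partial>\<mu>T \<partial>?R)"
  proof (intro nn_integral_cong)
    fix r assume r: "r \<in> space ?R"
    have "(\<integral>\<^sup>+f. H (f j, r) \<partial>?J) = (\<integral>\<^sup>+\<omega>. H (T j \<omega>, r) \<partial>M)"
      using r by (subst nn_integral_distr) simp_all
    also have "\<dots> = (\<integral>\<^sup>+t. H (t, r) \<partial>distr M borel (T j))"
      using r by (subst nn_integral_distr) simp_all
    also have "distr M borel (T j) = \<mu>T" using ident[of j] by (simp add: T_def[abs_def])
    finally show "(\<integral>\<^sup>+f. H (f j, r) \<partial>?J) = (\<integral>\<^sup>+t. H (t, r) \<partial>\<mu>T)" .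
  qed
  finally show ?thesis .
qed

lemma main_indep:
  assumes B: "j \<notin> B" and g[measurable]: "g \<in> borel_measurable (borel \<Otimes>\<^sub>M PiM B (\<lambda>_. borel))"
  shows "(\<integral>\<^sup>+\<omega>. g (Z j \<omega>, R B \<omega>) * ennreal ((eps j \<omega>)\<^sup>2) \<partial>M)
      = (\<integral>\<^sup>+\<omega>. g (Z j \<omega>, R B \<omega>) \<partial>M) * (\<integral>\<^sup>+\<omega>. ennreal ((eps 0 \<omega>)\<^sup>2) \<partial>M)"
proof -
  let ?R = "distr M (PiM B (\<lambda>_. borel)) (R B)"
  let ?c = "\<integral>\<^sup>+\<omega>. ennreal ((eps 0 \<omega>)\<^sup>2) \<partial>M"
  have "(\<integral>\<^sup>+\<omega>. g (Z j \<omega>, R B \<omega>) * ennreal ((eps j \<omega>)\<^sup>2) \<partial>M)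
     = (\<integral>\<^sup>+\<omega>. (\<lambda>(t, r). g (fst (snd t), r) * ennreal ((snd (snd t))\<^sup>2)) (T j \<omega>, R B \<omega>) \<partial>M)"
    by (simp add: T_def)
  also have "\<dots> = (\<integral>\<^sup>+r. \<integral>\<^sup>+t. g (fst (snd t), r) * ennreal ((snd (snd t))\<^sup>2) \<partial>\<mu>T \<partial>?R)"
    by (subst fubini_TR[OF B]) simp_all
  also have "\<dots> = (\<integral>\<^sup>+r. (\<integral>\<^sup>+t. g (fst (snd t), r) \<partial>\<mu>T) * ?c \<partial>?R)"
    by (intro nn_integral_cong inner) simp
  also have "\<dots> = (\<integral>\<^sup>+r. \<integral>\<^sup>+t. g (fst (snd t), r) \<partial>\<mu>T \<partial>?R) * ?c"
  proof (rule nn_integral_multc)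
    interpret TT: prob_space \<mu>T by (rule prob_space_distr) measurable
    show "(\<lambda>r. \<integral>\<^sup>+t. g (fst (snd t), r) \<partial>\<mu>T) \<in> borel_measurable ?R"
      by (rule TT.borel_measurable_nn_integral_fst[where f="\<lambda>(r, t). g (fst (snd t), r)", simplified]) measurable
  qed
  also have "(\<integral>\<^sup>+r. \<integral>\<^sup>+t. g (fst (snd t), r) \<partial>\<mu>T \<partial>?R) = (\<integral>\<^sup>+\<omega>. (\<lambda>(t, r). g (fst (snd t), r)) (T j \<omega>, R B \<omega>) \<partial>M)"
    by (subst fubini_TR[OF B]) simp_all
  also have "\<dots> = (\<integral>\<^sup>+\<omega>. g (Z j \<omega>, R B \<omega>) \<partial>M)" by (simp add: T_def)
  finally show ?thesis .
qed

lemma ind_integral: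
  assumes [measurable]: "Measurable.pred M P"
  shows "(\<integral>\<^sup>+\<omega>. (if P \<omega> then 1 else 0) \<partial>M) = emeasure M {\<omega>\<in>space M. P \<omega>}"
proof -
  have "(\<integral>\<^sup>+\<omega>. (if P \<omega> then 1 else 0) \<partial>M) = (\<integral>\<^sup>+\<omega>. indicator {\<omega>\<in>space M. P \<omega>} \<omega> \<partial>M)"
    by (intro nn_integral_cong) (simp add: indicator_def)
  also have "\<dots> = emeasure M {\<omega>\<in>space M. P \<omega>}" by (simp add: nn_integral_indicator)
  finally show ?thesis .
qed

lemma hyper_null:
  assumes densZ: "distributed M lborel (Z 0) fZ" and C: "C \<noteq> 0"
  shows "emeasure M {\<omega>\<in>space M. Z 0 \<omega> \<bullet> C = a} = 0"
proof -
  let ?H = "{z::real^'s. C \<bullet> z = a}"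
  have Hb: "?H \<in> sets lborel" by measurable
  have "negligible ?H" using C by (intro negligible_hyperplane) simp
  then have "?H \<in> null_sets lebesgue" by (simp add: negligible_iff_null_sets)
  then have Hn: "?H \<in> null_sets lborel" using null_sets_completion_iff[OF Hb] by simp
  have "{\<omega>\<in>space M. Z 0 \<omega> \<bullet> C = a} = Z 0 -` ?H \<inter> space M" by (auto simp: inner_commute)
  also have "emeasure M \<dots> = emeasure (distr M lborel (Z 0)) ?H"
    using Hb by (subst emeasure_distr) (simp_all add: measurable_lborel2)
  also have "\<dots> = emeasure (density lborel fZ) ?H" using densZ by (simp add: distributed_def)
  also have "\<dots> = (\<integral>\<^sup>+z. fZ z * indicator ?H z \<partial>lborel)"
    using Hb densZ by (subst emeasure_density) (simp_all add: distributed_def)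
  also have "\<dots> = 0" using Hn by (rule nn_integral_null_set)
  finally show ?thesis .
qed

lemma noties:
  assumes densZ: "distributed M lborel (Z 0) fZ" and C: "C \<noteq> 0" and jk: "j \<noteq> k"
  shows "emeasure M {\<omega>\<in>space M. Z j \<omega> \<bullet> C = Z k \<omega> \<bullet> C} = 0"
proof -
  let ?H = "\<lambda>(t::(real^'r) \<times> (real^'s) \<times> real, r::nat \<Rightarrow> (real^'r) \<times> (real^'s) \<times> real).
      (if fst (snd t) \<bullet> C = fst (snd (r k)) \<bullet> C then 1 else 0 :: ennreal)"
  have mk[measurable]: "(\<lambda>f. f k) \<in> PiM {k} (\<lambda>_. borel) \<rightarrow>\<^sub>M (borel :: ((real^'r) \<times> (real^'s) \<times> real) measure)"
    by (rule measurable_component_singleton) simp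
  have Hm: "?H \<in> borel_measurable (borel \<Otimes>\<^sub>M PiM {k} (\<lambda>_. borel))" by measurable
  have "emeasure M {\<omega>\<in>space M. Z j \<omega> \<bullet> C = Z k \<omega> \<bullet> C} = (\<integral>\<^sup>+\<omega>. (if Z j \<omega> \<bullet> C = Z k \<omega> \<bullet> C then 1 else 0) \<partial>M)"
    by (rule ind_integral[symmetric]) measurable
  also have "\<dots> = (\<integral>\<^sup>+\<omega>. ?H (T j \<omega>, R {k} \<omega>) \<partial>M)" by (simp add: T_def)
  also have "\<dots> = (\<integral>\<^sup>+r. \<integral>\<^sup>+t. ?H (t, r) \<partial>\<mu>T \<partial>distr M (PiM {k} (\<lambda>_. borel)) (R {k}))"
    using jk by (intro fubini_TR Hm) simp
  also have "\<dots> = (\<integral>\<^sup>+r. 0 \<partial>distr M (PiM {k} (\<lambda>_. borel)) (R {k}))"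
  proof (intro nn_integral_cong)
    fix r :: "nat \<Rightarrow> (real^'r) \<times> (real^'s) \<times> real"
    let ?a = "fst (snd (r k)) \<bullet> C"
    have "(\<integral>\<^sup>+t. ?H (t, r) \<partial>\<mu>T) = (\<integral>\<^sup>+\<omega>. (if Z 0 \<omega> \<bullet> C = ?a then 1 else 0) \<partial>M)"
      by (subst nn_integral_distr) (simp_all add: T_def)
    also have "\<dots> = emeasure M {\<omega>\<in>space M. Z 0 \<omega> \<bullet> C = ?a}"
      by (rule ind_integral) measurable
    also have "\<dots> = 0" by (rule hyper_null[OF densZ C])
    finally show "(\<integral>\<^sup>+t. ?H (t, r) \<partial>\<mu>T) = 0" .
  qed
  also have "\<dots> = 0" by simp
  finally show ?thesis .
qed

end

lemma card_sum_if: "real (card {k\<in>B. Q k}) = (\<Sum>k\<in>B. if Q k then 1 else 0)" if "finite B"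
  using that by (simp add: sum.If_cases Int_def)

context S0 begin

lemma rk_decomp:
  assumes j: "j < n"
  shows "real (rk n (\<lambda>k. Z k \<omega> \<bullet> C) j) = 1 + (\<Sum>k\<in>{..<n} - {j}. if fst (snd (R ({..<n} - {j}) \<omega> k)) \<bullet> C \<le> Z j \<omega> \<bullet> C then 1 else 0)"
proof -
  have "{k. k < n \<and> Z k \<omega> \<bullet> C \<le> Z j \<omega> \<bullet> C} = insert j {k\<in>{..<n} - {j}. Z k \<omega> \<bullet> C \<le> Z j \<omega> \<bullet> C}"
    using j by auto
  then have "real (rk n (\<lambda>k. Z k \<omega> \<bullet> C) j) = 1 + real (card {k\<in>{..<n} - {j}. Z k \<omega> \<bullet> C \<le> Z j \<omega> \<bullet> C})"
    unfolding rk_def by simp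
  also have "real (card {k\<in>{..<n} - {j}. Z k \<omega> \<bullet> C \<le> Z j \<omega> \<bullet> C}) = (\<Sum>k\<in>{..<n} - {j}. if Z k \<omega> \<bullet> C \<le> Z j \<omega> \<bullet> C then 1 else 0)"
    by (rule card_sum_if) simp
  also have "\<dots> = (\<Sum>k\<in>{..<n} - {j}. if fst (snd (R ({..<n} - {j}) \<omega> k)) \<bullet> C \<le> Z j \<omega> \<bullet> C then 1 else 0)"
    by (intro sum.cong) (auto simp: T_def)
  finally show ?thesis .
qed

lemma meas_rk[measurable]: "(\<lambda>\<omega>. real (rk n (\<lambda>k. Z k \<omega> \<bullet> C) j)) \<in> borel_measurable M"
proof -
  have "(\<lambda>\<omega>. real (rk n (\<lambda>k. Z k \<omega> \<bullet> C) j)) = (\<lambda>\<omega>. \<Sum>k<n. if Z k \<omega> \<bullet> C \<le> Z j \<omega> \<bullet> C then 1 else 0)"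
    unfolding rk_def using card_sum_if[of "{..<n}"] by (simp add: Collect_conj_eq[symmetric] lessThan_def Int_def)
  then show ?thesis by simp
qed

lemma expect_sel:
  assumes j: "j < n"
  shows "(\<integral>\<omega>. (if \<bar>real (rk n (\<lambda>k. Z k \<omega> \<bullet> C) j) - c\<bar> \<le> h then (eps j \<omega>)\<^sup>2 else 0) \<partial>M)
    = prob {\<omega>\<in>space M. \<bar>real (rk n (\<lambda>k. Z k \<omega> \<bullet> C) j) - c\<bar> \<le> h} * (\<integral>\<omega>. (eps 0 \<omega>)\<^sup>2 \<partial>M)"
proof -
  let ?B = "{..<n} - {j}"
  let ?g = "\<lambda>(z::real^'s, r::nat \<Rightarrow> (real^'r) \<times> (real^'s) \<times> real).
     (if \<bar>1 + (\<Sum>k\<in>?B. if fst (snd (r k)) \<bullet> C \<le> z \<bullet> C then 1 else 0) - c\<bar> \<le> h then 1 else 0 :: ennreal)"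
  have gm: "?g \<in> borel_measurable (borel \<Otimes>\<^sub>M PiM ?B (\<lambda>_. borel))"
  proof -
    have [measurable]: "k \<in> ?B \<Longrightarrow> (\<lambda>f. f k) \<in> PiM ?B (\<lambda>_. borel) \<rightarrow>\<^sub>M (borel :: ((real^'r) \<times> (real^'s) \<times> real) measure)" for k
      by (rule measurable_component_singleton) simp
    show ?thesis by measurable
  qed
  have B: "j \<notin> ?B" by simp
  have eq1: "\<And>\<omega>. ennreal (if \<bar>real (rk n (\<lambda>k. Z k \<omega> \<bullet> C) j) - c\<bar> \<le> h then (eps j \<omega>)\<^sup>2 else 0)
      = ?g (Z j \<omega>, R ?B \<omega>) * ennreal ((eps j \<omega>)\<^sup>2)"
    by (simp add: rk_decomp[OF j])
  have eq2: "\<And>\<omega>. (if \<bar>real (rk n (\<lambda>k. Z k \<omega> \<bullet> C) j) - c\<bar> \<le> h then 1 else 0) = ?g (Z j \<omega>, R ?B \<omega>)"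
    by (simp add: rk_decomp[OF j])
  have "(\<integral>\<omega>. (if \<bar>real (rk n (\<lambda>k. Z k \<omega> \<bullet> C) j) - c\<bar> \<le> h then (eps j \<omega>)\<^sup>2 else 0) \<partial>M)
     = enn2real (\<integral>\<^sup>+\<omega>. ennreal (if \<bar>real (rk n (\<lambda>k. Z k \<omega> \<bullet> C) j) - c\<bar> \<le> h then (eps j \<omega>)\<^sup>2 else 0) \<partial>M)"
    by (rule integral_eq_nn_integral) auto
  also have "\<dots> = enn2real ((\<integral>\<^sup>+\<omega>. ?g (Z j \<omega>, R ?B \<omega>) \<partial>M) * (\<integral>\<^sup>+\<omega>. ennreal ((eps 0 \<omega>)\<^sup>2) \<partial>M))"
    unfolding eq1 by (subst main_indep[OF B gm]) rule
  also have "(\<integral>\<^sup>+\<omega>. ?g (Z j \<omega>, R ?B \<omega>) \<partial>M) = emeasure M {\<omega>\<in>space M. \<bar>real (rk n (\<lambda>k. Z k \<omega> \<bullet> C) j) - c\<bar> \<le> h}"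
    unfolding eq2[symmetric] by (rule ind_integral) measurable
  also have "enn2real (emeasure M {\<omega>\<in>space M. \<bar>real (rk n (\<lambda>k. Z k \<omega> \<bullet> C) j) - c\<bar> \<le> h} * (\<integral>\<^sup>+\<omega>. ennreal ((eps 0 \<omega>)\<^sup>2) \<partial>M))
     = prob {\<omega>\<in>space M. \<bar>real (rk n (\<lambda>k. Z k \<omega> \<bullet> C) j) - c\<bar> \<le> h} * enn2real (\<integral>\<^sup>+\<omega>. ennreal ((eps 0 \<omega>)\<^sup>2) \<partial>M)"
    by (simp add: enn2real_mult measure_def)
  also have "enn2real (\<integral>\<^sup>+\<omega>. ennreal ((eps 0 \<omega>)\<^sup>2) \<partial>M) = (\<integral>\<omega>. (eps 0 \<omega>)\<^sup>2 \<partial>M)"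
    by (rule integral_eq_nn_integral[symmetric]) auto
  finally show ?thesis .
qed

end

context S0 begin

lemma prob_if: "Measurable.pred M P \<Longrightarrow> prob {\<omega>\<in>space M. P \<omega>} = (\<integral>\<omega>. (if P \<omega> then 1 else 0) \<partial>M)"
proof -
  assume [measurable]: "Measurable.pred M P"
  have "(\<integral>\<omega>. (if P \<omega> then 1 else 0) \<partial>M) = (\<integral>\<omega>. indicator {\<omega>\<in>space M. P \<omega>} \<omega> \<partial>M)"
    by (intro Bochner_Integration.integral_cong) (auto simp: indicator_def)
  also have "\<dots> = prob {\<omega>\<in>space M. P \<omega>}" by simp
  finally show ?thesis by simp
qed

lemma int_if: "Measurable.pred M P \<Longrightarrow> integrable M (\<lambda>\<omega>. if P \<omega> then (1::real) else 0)"
  by (intro integrable_const_bound[where B=1]) auto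

lemma AE_inj:
  assumes densZ: "distributed M lborel (Z 0) fZ" and C: "C \<noteq> 0"
  shows "AE \<omega> in M. inj_on (\<lambda>k. Z k \<omega> \<bullet> C) {..<n}"
proof -
  have "AE \<omega> in M. \<forall>j\<in>{..<n}. \<forall>k\<in>{..<n}. j \<noteq> k \<longrightarrow> Z j \<omega> \<bullet> C \<noteq> Z k \<omega> \<bullet> C"
  proof (intro eventually_ball_finite ballI finite_lessThan)
    fix j k
    show "AE \<omega> in M. j \<noteq> k \<longrightarrow> Z j \<omega> \<bullet> C \<noteq> Z k \<omega> \<bullet> C"
    proof (cases "j = k")
      case True then show ?thesis by simp
    next
      case False
      have N: "{\<omega>\<in>space M. Z j \<omega> \<bullet> C = Z k \<omega> \<bullet> C} \<in> null_sets M"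
        using noties[OF densZ C False] by (intro null_setsI) (simp_all, measurable)
      show ?thesis by (rule AE_I'[OF N]) auto
    qed
  qed
  then show ?thesis by eventually_elim (auto simp: inj_on_def)
qed

lemma sum_prob_sel:
  assumes densZ: "distributed M lborel (Z 0) fZ" and C: "C \<noteq> 0" and p: "p \<ge> 1"
  shows "(\<Sum>j<n. prob {\<omega>\<in>space M. \<bar>real (rk n (\<lambda>k. Z k \<omega> \<bullet> C) j) - real c\<bar> \<le> (real p - 1) / 2}) \<le> real p"
proof -
  let ?s = "\<lambda>j \<omega>. \<bar>real (rk n (\<lambda>k. Z k \<omega> \<bullet> C) j) - real c\<bar> \<le> (real p - 1) / 2"
  have "(\<Sum>j<n. prob {\<omega>\<in>space M. ?s j \<omega>}) = (\<Sum>j<n. \<integral>\<omega>. (if ?s j \<omega> then 1 else 0::real) \<partial>M)"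
    by (intro sum.cong refl prob_if) measurable
  also have "\<dots> = (\<integral>\<omega>. (\<Sum>j<n. if ?s j \<omega> then 1 else 0::real) \<partial>M)"
  proof -
    have "(\<integral>\<omega>. (\<Sum>j<n. if ?s j \<omega> then 1 else 0::real) \<partial>M) = (\<Sum>j<n. \<integral>\<omega>. (if ?s j \<omega> then 1 else 0::real) \<partial>M)"
    proof -
      have int: "\<And>j. integrable M (\<lambda>\<omega>. if ?s j \<omega> then 1 else (0::real))" by (rule int_if) measurable
      show ?thesis by (subst Bochner_Integration.integral_sum) (rule int, rule refl)
    qed
    then show ?thesis by simp
  qed
  also have "\<dots> \<le> (\<integral>\<omega>. real p \<partial>M)"
  proof (rule integral_mono_AE)
    show "integrable M (\<lambda>\<omega>. \<Sum>j<n. if ?s j \<omega> then 1 else 0 :: real)"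
      by (rule Bochner_Integration.integrable_sum, rule int_if, measurable)
    show "integrable M (\<lambda>\<omega>. real p)" by simp
    show "AE \<omega> in M. (\<Sum>j<n. if ?s j \<omega> then 1 else 0) \<le> real p"
      using AE_inj[OF densZ C, of n]
    proof eventually_elim
      case (elim \<omega>)
      have "(\<Sum>j<n. if ?s j \<omega> then 1 else 0) = real (card {j\<in>{..<n}. ?s j \<omega>})"
        by (rule card_sum_if[symmetric]) simp
      also have "{j\<in>{..<n}. ?s j \<omega>} = {j. j < n \<and> ?s j \<omega>}" by auto
      also have "real (card \<dots>) \<le> real p" using card_window[OF elim p] by simp
      finally show ?case .
    qed
  qed
  also have "\<dots> = real p" by (simp add: prob_space)
  finally show ?thesis .
qed

end

lemma int_sum3:
  fixes f :: "nat \<Rightarrow> nat \<Rightarrow> nat \<Rightarrow> 'a \<Rightarrow> real"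
  assumes "\<And>i k j. integrable M (f i k j)"
  shows "integrable M (\<lambda>\<omega>. \<Sum>i\<in>I. \<Sum>k\<in>K. \<Sum>j\<in>J. f i k j \<omega>)"
    and "(\<integral>\<omega>. (\<Sum>i\<in>I. \<Sum>k\<in>K. \<Sum>j\<in>J. f i k j \<omega>) \<partial>M) = (\<Sum>i\<in>I. \<Sum>k\<in>K. \<Sum>j\<in>J. \<integral>\<omega>. f i k j \<omega> \<partial>M)"
  using assms by (simp_all add: Bochner_Integration.integral_sum Bochner_Integration.integrable_sum)

context S0 begin

definition G :: "nat \<Rightarrow> nat \<Rightarrow> nat \<Rightarrow> nat \<Rightarrow> real^'s \<Rightarrow> 'a \<Rightarrow> real" where
  "G p n b r C \<omega> = (\<Sum>i\<in>{1..r}. \<Sum>k\<in>{b+1..b+p}. \<Sum>j<n.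
     (if \<bar>real (rk n (\<lambda>k. Z k \<omega> \<bullet> C) j) - real ((i - 1) * (b + p) + k)\<bar> \<le> (real p - 1) / 2 then (eps j \<omega>)\<^sup>2 else 0))"

lemma int_eps2:
  assumes "integrable M (\<lambda>\<omega>. (eps 0 \<omega>)\<^sup>2)"
  shows "integrable M (\<lambda>\<omega>. (eps j \<omega>)\<^sup>2)"
proof -
  have "integrable (distr M borel (T 0)) (\<lambda>t. (snd (snd t))\<^sup>2)"
    using assms by (subst integrable_distr_eq) (simp_all add: T_def)
  then have "integrable (distr M borel (T j)) (\<lambda>t. (snd (snd t))\<^sup>2)"
    using ident[of j] by (simp add: T_def[abs_def])
  then show ?thesis by (subst (asm) integrable_distr_eq) (simp_all add: T_def)
qed

lemma int_term:
  assumes "integrable M (\<lambda>\<omega>. (eps 0 \<omega>)\<^sup>2)" and [measurable]: "Measurable.pred M S"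
  shows "integrable M (\<lambda>\<omega>. if S \<omega> then (eps j \<omega>)\<^sup>2 else 0)"
  by (rule Bochner_Integration.integrable_bound[OF int_eps2[OF assms(1), of j]]) auto

lemma EG:
  assumes densZ: "distributed M lborel (Z 0) fZ" and C: "C \<noteq> 0" and p: "p \<ge> 1"
    and e2: "integrable M (\<lambda>\<omega>. (eps 0 \<omega>)\<^sup>2)"
  shows "integrable M (G p n b r C)"
    and "(\<integral>\<omega>. G p n b r C \<omega> \<partial>M) \<le> real r * real p * real p * (\<integral>\<omega>. (eps 0 \<omega>)\<^sup>2 \<partial>M)"
proof -
  let ?t = "\<lambda>i k j \<omega>. (if \<bar>real (rk n (\<lambda>k. Z k \<omega> \<bullet> C) j) - real ((i - 1) * (b + p) + k)\<bar> \<le> (real p - 1) / 2 then (eps j \<omega>)\<^sup>2 else 0::real)"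
  let ?E = "\<integral>\<omega>. (eps 0 \<omega>)\<^sup>2 \<partial>M"
  have E0: "0 \<le> ?E" by simp
  have it: "integrable M (?t i k j)" for i k j by (rule int_term[OF e2]) measurable
  have Gd: "G p n b r C = (\<lambda>\<omega>. \<Sum>i\<in>{1..r}. \<Sum>k\<in>{b+1..b+p}. \<Sum>j<n. ?t i k j \<omega>)"
    by (simp add: G_def[abs_def])
  show "integrable M (G p n b r C)" unfolding Gd
    by (rule int_sum3(1)[OF it])
  have "(\<integral>\<omega>. G p n b r C \<omega> \<partial>M) = (\<Sum>i\<in>{1..r}. \<Sum>k\<in>{b+1..b+p}. \<Sum>j<n. \<integral>\<omega>. ?t i k j \<omega> \<partial>M)"
    unfolding Gd by (rule int_sum3(2)[OF it])
  also have "\<dots> \<le> (\<Sum>i\<in>{1..r}. \<Sum>k\<in>{b+1..b+p}. real p * ?E)"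
  proof (intro sum_mono)
    fix i k
    have "(\<Sum>j<n. \<integral>\<omega>. ?t i k j \<omega> \<partial>M) = (\<Sum>j<n. prob {\<omega>\<in>space M. \<bar>real (rk n (\<lambda>k. Z k \<omega> \<bullet> C) j) - real ((i - 1) * (b + p) + k)\<bar> \<le> (real p - 1) / 2} * ?E)"
      by (intro sum.cong refl expect_sel) simp
    also have "\<dots> = (\<Sum>j<n. prob {\<omega>\<in>space M. \<bar>real (rk n (\<lambda>k. Z k \<omega> \<bullet> C) j) - real ((i - 1) * (b + p) + k)\<bar> \<le> (real p - 1) / 2}) * ?E"
      by (simp add: sum_distrib_right)
    also have "\<dots> \<le> real p * ?E"
      by (intro mult_right_mono sum_prob_sel[OF densZ C p] E0)
    finally show "(\<Sum>j<n. \<integral>\<omega>. ?t i k j \<omega> \<partial>M) \<le> real p * ?E" .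
  qed
  also have "\<dots> = real r * real p * real p * ?E" by simp
  finally show "(\<integral>\<omega>. G p n b r C \<omega> \<partial>M) \<le> real r * real p * real p * ?E" .
qed

end

lemma tau_lb:
  fixes f :: "'a \<Rightarrow> real"
  assumes M: "prob_space M" and g[measurable]: "g \<in> borel_measurable M"
    and f: "integrable M (\<lambda>\<omega>. (f \<omega>)\<^sup>2)"
    and nz: "(\<integral>\<omega>. (real_cond_exp M (vimage_algebra (space M) g borel) (\<lambda>\<omega>. (f \<omega>)\<^sup>2) \<omega>)\<^sup>2 \<partial>M) \<noteq> 0"
  shows "(\<integral>\<omega>. (f \<omega>)\<^sup>2 \<partial>M)\<^sup>2 \<le> (\<integral>\<omega>. (real_cond_exp M (vimage_algebra (space M) g borel) (\<lambda>\<omega>. (f \<omega>)\<^sup>2) \<omega>)\<^sup>2 \<partial>M)"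
proof -
  interpret prob_space M by (rule M)
  let ?F = "vimage_algebra (space M) g borel"
  have sub: "subalgebra M ?F"
    unfolding subalgebra_def
  proof
    show "space ?F = space M" by simp
    show "sets ?F \<subseteq> sets M"
    proof
      fix A assume A: "A \<in> sets ?F"
      have "id \<in> measurable M ?F"
        by (rule measurable_vimage_algebra2) auto
      then have "id -` A \<inter> space M \<in> sets M" using A by (rule measurable_sets)
      moreover have "A \<subseteq> space M" using sets.sets_into_space[OF A] by simp
      ultimately show "A \<in> sets M" by (simp add: Int_absorb2)
    qed
  qed
  interpret S: finite_measure_subalgebra M ?F
    by unfold_locales (rule sub)
  let ?c = "real_cond_exp M ?F (\<lambda>\<omega>. (f \<omega>)\<^sup>2)"
  have ci: "integrable M ?c" and ce: "(\<integral>\<omega>. ?c \<omega> \<partial>M) = (\<integral>\<omega>. (f \<omega>)\<^sup>2 \<partial>M)"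
    using S.real_cond_exp_int[OF f] by auto
  have c2: "integrable M (\<lambda>\<omega>. (?c \<omega>)\<^sup>2)"
    using nz not_integrable_integral_eq by blast
  have "0 \<le> variance ?c" by (rule variance_positive)
  also have "variance ?c = (\<integral>\<omega>. (?c \<omega>)\<^sup>2 \<partial>M) - (\<integral>\<omega>. ?c \<omega> \<partial>M)\<^sup>2"
    by (rule variance_eq[OF ci c2])
  finally show ?thesis using ce by simp
qed

context S0 begin

lemma pathwise:
  fixes sg :: "real^'r \<Rightarrow> real^'s \<Rightarrow> real"
  assumes inj: "inj_on (\<lambda>k. Z k \<omega> \<bullet> C) {..<n}" and p: "p \<ge> 3"
    and B0: "\<And>x z. (sg x z)\<^sup>2 \<le> B0"
  shows "\<bar>S_V p n b r (\<lambda>k. Z k \<omega> \<bullet> C) (\<lambda>j. sg (X j \<omega>) (Z j \<omega>) * eps j \<omega>)\<bar> \<le> 2 * B0 * G p n b r C \<omega>"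
proof -
  let ?xi = "\<lambda>j. sg (X j \<omega>) (Z j \<omega>) * eps j \<omega>"
  have "\<bar>S_V p n b r (\<lambda>k. Z k \<omega> \<bullet> C) ?xi\<bar> \<le> 2 * (\<Sum>i\<in>{1..r}. \<Sum>k\<in>{b+1..b+p}. \<Sum>j<n.
     (if \<bar>real (rk n (\<lambda>k. Z k \<omega> \<bullet> C) j) - real ((i - 1) * (b + p) + k)\<bar> \<le> (real p - 1) / 2 then (?xi j)\<^sup>2 else 0))"
    by (rule SV_bound[OF inj p])
  also have "\<dots> \<le> 2 * (\<Sum>i\<in>{1..r}. \<Sum>k\<in>{b+1..b+p}. \<Sum>j<n.
     (if \<bar>real (rk n (\<lambda>k. Z k \<omega> \<bullet> C) j) - real ((i - 1) * (b + p) + k)\<bar> \<le> (real p - 1) / 2 then B0 * (eps j \<omega>)\<^sup>2 else 0))"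
  proof -
    have "(?xi j)\<^sup>2 \<le> B0 * (eps j \<omega>)\<^sup>2" for j
      unfolding power_mult_distrib by (intro mult_right_mono B0) simp
    then show ?thesis by (intro mult_left_mono sum_mono) auto
  qed
  also have "\<dots> = 2 * B0 * G p n b r C \<omega>"
    unfolding G_def sum_distrib_left by (intro sum.cong refl) simp
  finally show ?thesis .
qed

end

context S0 begin

lemma distrT: "distr M borel (T j) = distr M borel (T 0)"
proof -
  have Tj: "T i = (\<lambda>\<omega>. (X i \<omega>, Z i \<omega>, eps i \<omega>))" for i by (simp add: fun_eq_iff T_def)
  show ?thesis unfolding Tj by (rule ident)
qed

lemma G_nonneg: "0 \<le> G p n b r C \<omega>"
  unfolding G_def by (intro sum_nonneg) auto

lemma measure_bound:
  fixes sg :: "real^'r \<Rightarrow> real^'s \<Rightarrow> real"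
  assumes densZ: "distributed M lborel (Z 0) fZ" and p: "p \<ge> 3"
    and B0: "\<And>x z. (sg x z)\<^sup>2 \<le> B0" and e2: "integrable M (\<lambda>\<omega>. (eps 0 \<omega>)\<^sup>2)"
    and e: "e > 0" and C: "C \<noteq> 0" and kap: "\<kappa> > 0"
    and D0: "D \<ge> 0" and Dlb: "D \<noteq> 0 \<Longrightarrow> n > 0 \<and> \<kappa> * sqrt (real n) \<le> D"
  shows "measure M {\<omega>\<in>space M. \<bar>S_V p n b r (\<lambda>k. Z k \<omega> \<bullet> C) (\<lambda>j. sg (X j \<omega>) (Z j \<omega>) * eps j \<omega>)\<bar> / D \<ge> e}
     \<le> 2 * B0 * real p * real p * (\<integral>\<omega>. (eps 0 \<omega>)\<^sup>2 \<partial>M) / (e * \<kappa>) * (real r / sqrt (real n))"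
    (is "measure M ?E \<le> ?K * _")
proof -
  let ?E2 = "\<integral>\<omega>. (eps 0 \<omega>)\<^sup>2 \<partial>M"
  have B0p: "0 \<le> B0" using B0[of undefined undefined] by (meson order_trans zero_le_power2)
  have E2p: "0 \<le> ?E2" by simp
  have Kp: "0 \<le> ?K" using B0p E2p e kap by simp
  show ?thesis
  proof (cases "D = 0")
    case True
    then have E0: "?E = {}" using e by auto
    have "0 \<le> ?K * (real r / sqrt (real n))" by (rule mult_nonneg_nonneg[OF Kp]) simp
    then show ?thesis unfolding E0 by simp
  next
    case False
    then have Dp: "D > 0" using D0 by simp
    have lb: "\<kappa> * sqrt (real n) \<le> D" using Dlb False by simp
    have sn: "sqrt (real n) > 0" using Dlb False by simp
    have [measurable]: "G p n b r C \<in> borel_measurable M"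
      using EG(1)[OF densZ C _ e2, of p n b r] p by (simp add: borel_measurable_integrable)
    have AE: "AE \<omega> in M. \<omega> \<in> ?E \<longrightarrow> \<omega> \<in> {\<omega>\<in>space M. e * D \<le> 2 * B0 * G p n b r C \<omega>}"
      using AE_inj[OF densZ C, of n]
    proof eventually_elim
      case (elim \<omega>)
      show ?case
      proof
        assume w: "\<omega> \<in> ?E"
        let ?S = "\<bar>S_V p n b r (\<lambda>k. Z k \<omega> \<bullet> C) (\<lambda>j. sg (X j \<omega>) (Z j \<omega>) * eps j \<omega>)\<bar>"
        have "e \<le> ?S / D" using w by simp
        then have "e * D \<le> ?S" using Dp by (simp add: le_divide_eq)
        also have "?S \<le> 2 * B0 * G p n b r C \<omega>" by (rule pathwise[OF elim p B0])
        finally show "\<omega> \<in> {\<omega>\<in>space M. e * D \<le> 2 * B0 * G p n b r C \<omega>}" using w by simp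
      qed
    qed
    have "measure M ?E \<le> measure M {\<omega>\<in>space M. e * D \<le> 2 * B0 * G p n b r C \<omega>}"
      by (rule finite_measure_mono_AE[OF AE]) measurable
    also have "\<dots> \<le> (\<integral>\<omega>. 2 * B0 * G p n b r C \<omega> \<partial>M) / (e * D)"
    proof (rule integral_Markov_inequality_measure[where A="space M"])
      show "integrable M (\<lambda>\<omega>. 2 * B0 * G p n b r C \<omega>)"
        using EG(1)[OF densZ C _ e2, of p n b r] p by simp
      show "AE \<omega> in M. 0 \<le> 2 * B0 * G p n b r C \<omega>"
        using B0p G_nonneg by (intro AE_I2) simp
      show "0 < e * D" using e Dp by simp
    qed simp
    also have "\<dots> = 2 * B0 * (\<integral>\<omega>. G p n b r C \<omega> \<partial>M) / (e * D)" by simp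
    also have "\<dots> \<le> 2 * B0 * (real r * real p * real p * ?E2) / (e * D)"
      using EG(2)[OF densZ C _ e2, of p n b r] p B0p e Dp
      by (intro divide_right_mono mult_left_mono) auto
    also have "\<dots> \<le> 2 * B0 * (real r * real p * real p * ?E2) / (e * (\<kappa> * sqrt (real n)))"
      using lb e kap sn B0p E2p Dp
      by (intro divide_left_mono mult_left_mono mult_nonneg_nonneg mult_pos_pos) auto
    also have "\<dots> = ?K * (real r / sqrt (real n))"
      using e kap sn by (simp add: field_simps)
    finally show ?thesis .
  qed
qed

lemma measure_zero:
  fixes sg :: "real^'r \<Rightarrow> real^'s \<Rightarrow> real"
  assumes sgm[measurable]: "(\<lambda>(x, z). sg x z) \<in> borel_measurable borel"
    and z: "AE \<omega> in M. sg (X 0 \<omega>) (Z 0 \<omega>) * eps 0 \<omega> = 0" and e: "e > 0"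
  shows "measure M {\<omega>\<in>space M. \<bar>S_V p n b r (\<lambda>k. Z k \<omega> \<bullet> C) (\<lambda>j. sg (X j \<omega>) (Z j \<omega>) * eps j \<omega>)\<bar> / D \<ge> e} = 0"
proof -
  let ?phi = "\<lambda>t::(real^'r) \<times> (real^'s) \<times> real. sg (fst t) (fst (snd t)) * snd (snd t)"
  have phim[measurable]: "?phi \<in> borel_measurable borel"
  proof -
    have "(\<lambda>t::(real^'r) \<times> (real^'s) \<times> real. (\<lambda>(x, z). sg x z) (fst t, fst (snd t))) \<in> borel_measurable borel"
      by measurable
    then show ?thesis by simp
  qed
  have Ej: "AE \<omega> in M. sg (X j \<omega>) (Z j \<omega>) * eps j \<omega> = 0" for j
  proof -
    have Pm: "{t \<in> space borel. ?phi t = 0} \<in> sets borel" by measurable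
    have "AE t in distr M borel (T 0). ?phi t = 0"
      using z unfolding AE_distr_iff[OF measT Pm] by (simp add: T_def)
    then have "AE t in distr M borel (T j). ?phi t = 0"
      unfolding distrT[of j] .
    then show ?thesis unfolding AE_distr_iff[OF measT Pm] by (simp add: T_def)
  qed
  have "AE \<omega> in M. \<forall>j\<in>{..<n}. sg (X j \<omega>) (Z j \<omega>) * eps j \<omega> = 0"
    by (intro eventually_ball_finite ballI Ej) simp
  then have AE: "AE \<omega> in M. \<omega> \<in> {\<omega>\<in>space M. \<bar>S_V p n b r (\<lambda>k. Z k \<omega> \<bullet> C) (\<lambda>j. sg (X j \<omega>) (Z j \<omega>) * eps j \<omega>)\<bar> / D \<ge> e} \<longrightarrow> \<omega> \<in> {}"
  proof eventually_elim
    case (elim \<omega>)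
    let ?xi = "\<lambda>j. sg (X j \<omega>) (Z j \<omega>) * eps j \<omega>"
    have "gam p n (\<lambda>k. Z k \<omega> \<bullet> C) ?xi l = 0" for l
      unfolding gam_def using elim by (auto simp: Wnb_def intro!: sum.neutral)
    then have "gam_ord p n (\<lambda>k. Z k \<omega> \<bullet> C) ?xi k = 0" for k
      unfolding gam_ord_def by simp
    then have "S_V p n b r (\<lambda>k. Z k \<omega> \<bullet> C) ?xi = 0" unfolding S_V_def by simp
    then show ?case using e by simp
  qed
  have "measure M {\<omega>\<in>space M. \<bar>S_V p n b r (\<lambda>k. Z k \<omega> \<bullet> C) (\<lambda>j. sg (X j \<omega>) (Z j \<omega>) * eps j \<omega>)\<bar> / D \<ge> e} \<le> measure M {}"
    by (rule finite_measure_mono_AE[OF AE]) simp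
  then show ?thesis using measure_nonneg[of M] by (simp add: order_antisym)
qed

end

lemma r_over_sqrt:
  fixes b r :: "nat \<Rightarrow> nat"
  assumes b_rate: "(\<lambda>n. real (b n)) \<sim>[sequentially] (\<lambda>n. real n powr (2/3))"
    and r_rate: "(\<lambda>n. real (r n)) \<sim>[sequentially] (\<lambda>n. real n / real (b n))"
  shows "(\<lambda>n. real (r n) / sqrt (real n)) \<longlonglongrightarrow> 0"
proof -
  have "(\<lambda>n. real n / real (b n)) \<sim>[sequentially] (\<lambda>n. real n / real n powr (2/3))"
    by (intro asymp_equiv_intros b_rate)
  then have "(\<lambda>n. real (r n)) \<sim>[sequentially] (\<lambda>n. real n / real n powr (2/3))"
    using r_rate asymp_equiv_trans by blast
  then have "(\<lambda>n. real (r n) / sqrt (real n)) \<sim>[sequentially] (\<lambda>n. real n / real n powr (2/3) / sqrt (real n))"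
    by (intro asymp_equiv_intros)
  moreover have "(\<lambda>n. real n / real n powr (2/3) / sqrt (real n)) \<longlonglongrightarrow> 0"
    by real_asymp
  ultimately show ?thesis
    using asymp_equiv_tendsto_transfer asymp_equiv_sym by blast
qed

theorem lemma2:
  fixes M :: "'a measure"
    and X :: "nat \<Rightarrow> 'a \<Rightarrow> real^'r" and Z :: "nat \<Rightarrow> 'a \<Rightarrow> real^'s"
    and eps :: "nat \<Rightarrow> 'a \<Rightarrow> real" and Y :: "nat \<Rightarrow> 'a \<Rightarrow> real"
    and m :: "real^'r \<Rightarrow> real^'s \<Rightarrow> real" and m1 :: "real^'r \<Rightarrow> real"
    and sigma :: "real^'r \<Rightarrow> real^'s \<Rightarrow> real"
    and fX :: "real^'r \<Rightarrow> ennreal" and fZ :: "real^'s \<Rightarrow> ennreal"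
    and p q :: nat and b r :: "nat \<Rightarrow> nat" and lam :: "nat \<Rightarrow> 'r \<Rightarrow> real"
  assumes M: "prob_space M"
    and measX: "\<forall>i. X i \<in> borel_measurable M"
    and measZ: "\<forall>i. Z i \<in> borel_measurable M"
    and measE: "\<forall>i. eps i \<in> borel_measurable M"
    and indep: "prob_space.indep_vars M (\<lambda>_. borel) (\<lambda>i \<omega>. (X i \<omega>, Z i \<omega>, eps i \<omega>)) UNIV"
    and ident: "\<forall>i. distr M borel (\<lambda>\<omega>. (X i \<omega>, Z i \<omega>, eps i \<omega>))
                    = distr M borel (\<lambda>\<omega>. (X 0 \<omega>, Z 0 \<omega>, eps 0 \<omega>))"
    and eps_indep: "distr M (borel \<Otimes>\<^sub>M borel) (\<lambda>\<omega>. ((X 0 \<omega>, Z 0 \<omega>), eps 0 \<omega>))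
                       = distr M borel (\<lambda>\<omega>. (X 0 \<omega>, Z 0 \<omega>)) \<Otimes>\<^sub>M distr M borel (eps 0)"
    and eps_int: "integrable M (eps 0)"
    and eps_mean: "prob_space.expectation M (eps 0) = 0"
    and eps_var: "integrable M (\<lambda>\<omega>. (eps 0 \<omega>)\<^sup>2)"
    and model: "\<forall>i \<omega>. Y i \<omega> = m (X i \<omega>) (Z i \<omega>) + sigma (X i \<omega>) (Z i \<omega>) * eps i \<omega>"
    and sigma_meas: "(\<lambda>(x, z). sigma x z) \<in> borel_measurable borel"
    and H0: "\<forall>x z. m x z = m1 x"
    and densX: "distributed M lborel (X 0) fX"
    and densX_pos: "\<exists>c>0. \<forall>x. fX x \<noteq> 0 \<longrightarrow> ennreal c \<le> fX x"
    and densZ: "distributed M lborel (Z 0) fZ"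
    and densZ_pos: "\<exists>c>0. \<forall>z. fZ z \<noteq> 0 \<longrightarrow> ennreal c \<le> fZ z"
    and smooth: "derivs_bdd_ucont (Suc q) m1"
    and lipschitz: "\<forall>C::real^'s. norm C = 1 \<longrightarrow>
          (\<exists>g L. L-lipschitz_on UNIV g \<and>
             (AE \<omega> in M. real_cond_exp M (vimage_algebra (space M) (\<lambda>\<omega>. Z 0 \<omega> \<bullet> C) borel)
                            (\<lambda>\<omega>. (Y 0 \<omega> - m1 (X 0 \<omega>))\<^sup>2) \<omega> = g (Z 0 \<omega> \<bullet> C)))"
    and sigma_bdd: "\<exists>B. \<forall>x z. (sigma x z)\<^sup>2 \<le> B"
    and eps_4: "integrable M (\<lambda>\<omega>. (eps 0 \<omega>) ^ 4)"
    and lam_pos: "\<forall>n i. lam n i > 0"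
    and lam_0: "\<forall>i. (\<lambda>n. lam n i) \<longlonglongrightarrow> 0"
    and lam_rate: "\<forall>i j. (\<lambda>n. lam n i) \<in> \<Theta>(\<lambda>n. lam n j)"
    and lam_1: "\<forall>i. (\<lambda>n. real n * lam n i ^ (4 * (q + 1))) \<longlonglongrightarrow> 0"
    and lam_2: "\<forall>i. filterlim (\<lambda>n. real n * lam n i ^ (2 * CARD('r)) / (ln (real n))\<^sup>2) at_top sequentially"
    and p_odd: "odd p" and p_ge: "p \<ge> 3"
    and b_rate: "(\<lambda>n. real (b n)) \<sim>[sequentially] (\<lambda>n. real n powr (2/3))"
    and r_rate: "(\<lambda>n. real (r n)) \<sim>[sequentially] (\<lambda>n. real n / real (b n))"
  shows "\<forall>e>0. (\<lambda>n. SUP C\<in>{C::real^'s. norm C = 1}.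
            measure M {\<omega>\<in>space M.
              \<bar>S_V p n (b n) (r n) (\<lambda>j. Z j \<omega> \<bullet> C) (\<lambda>j. Y j \<omega> - m1 (X j \<omega>))\<bar>
                / (sqrt (real n) * sd p (tau M (Z 0) (\<lambda>\<omega>. Y 0 \<omega> - m1 (X 0 \<omega>)) C)) \<ge> e})
          \<longlonglongrightarrow> 0"
proof -
  interpret S: S0 M X Z eps
    by (rule S0.intro[OF M], unfold_locales) (use measX measZ measE indep ident eps_indep in auto)
  let ?sg = "\<lambda>x z. sigma x z"
  have Yeq: "\<And>j \<omega>. Y j \<omega> - m1 (X j \<omega>) = sigma (X j \<omega>) (Z j \<omega>) * eps j \<omega>"
    using model H0 by simp
  have Yf1: "\<And>\<omega>. (\<lambda>j. Y j \<omega> - m1 (X j \<omega>)) = (\<lambda>j. sigma (X j \<omega>) (Z j \<omega>) * eps j \<omega>)"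
    using Yeq by (simp add: fun_eq_iff)
  have Yf0: "(\<lambda>\<omega>. Y 0 \<omega> - m1 (X 0 \<omega>)) = (\<lambda>\<omega>. sigma (X 0 \<omega>) (Z 0 \<omega>) * eps 0 \<omega>)"
    using Yeq by (simp add: fun_eq_iff)
  obtain B0 where B0: "\<And>x z. (sigma x z)\<^sup>2 \<le> B0" using sigma_bdd by blast
  have B0p: "0 \<le> B0" using B0[of undefined undefined] by (meson order_trans zero_le_power2)
  have [measurable]: "eps 0 \<in> borel_measurable M" "X 0 \<in> borel_measurable M" "Z 0 \<in> borel_measurable M"
    using measX measZ measE by auto
  have sgm[measurable]: "(\<lambda>\<omega>. sigma (X 0 \<omega>) (Z 0 \<omega>)) \<in> borel_measurable M"
  proof -
    have "(\<lambda>\<omega>. (\<lambda>(x, z). sigma x z) (X 0 \<omega>, Z 0 \<omega>)) \<in> borel_measurable M"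
      using sigma_meas by (intro measurable_compose[OF _ sigma_meas]) (simp add: borel_prod[symmetric])
    then show ?thesis by simp
  qed
  let ?xi = "\<lambda>\<omega>. sigma (X 0 \<omega>) (Z 0 \<omega>) * eps 0 \<omega>"
  have xi2: "integrable M (\<lambda>\<omega>. (?xi \<omega>)\<^sup>2)"
  proof (rule Bochner_Integration.integrable_bound[OF integrable_mult_right[OF eps_var, of B0]])
    show "(\<lambda>\<omega>. (?xi \<omega>)\<^sup>2) \<in> borel_measurable M" by measurable
    show "AE \<omega> in M. norm ((?xi \<omega>)\<^sup>2) \<le> norm (B0 * (eps 0 \<omega>)\<^sup>2)"
      using B0 B0p by (intro AE_I2) (simp add: power_mult_distrib abs_mult mult_right_mono)
  qed
  let ?s2 = "\<integral>\<omega>. (?xi \<omega>)\<^sup>2 \<partial>M"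
  let ?E2 = "\<integral>\<omega>. (eps 0 \<omega>)\<^sup>2 \<partial>M"
  let ?cp = "2 * real p * (2 * real p - 1) / (3 * (real p - 1))"
  have cp: "?cp > 0" using p_ge by (intro divide_pos_pos mult_pos_pos) auto
  let ?mu = "\<lambda>e n C. measure M {\<omega>\<in>space M.
              \<bar>S_V p n (b n) (r n) (\<lambda>j. Z j \<omega> \<bullet> C) (\<lambda>j. Y j \<omega> - m1 (X j \<omega>))\<bar>
                / (sqrt (real n) * sd p (tau M (Z 0) (\<lambda>\<omega>. Y 0 \<omega> - m1 (X 0 \<omega>)) C)) \<ge> e}"
  have sd_abs: "sd p t = sqrt ?cp * \<bar>t\<bar>" for t
    unfolding sd_def real_sqrt_mult real_sqrt_abs ..
  have bound: "\<exists>K. \<forall>n C. norm C = 1 \<longrightarrow> ?mu e n C \<le> K * (real (r n) / sqrt (real n))" if e: "e > 0" for e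
  proof (cases "?s2 = 0")
    case True
    have "AE \<omega> in M. (?xi \<omega>)\<^sup>2 = 0"
      using True integral_nonneg_eq_0_iff_AE[OF xi2] by auto
    then have z: "AE \<omega> in M. ?xi \<omega> = 0" by simp
    show ?thesis
    proof (intro exI allI impI)
      fix n and C :: "real^'s"
      show "?mu e n C \<le> 0 * (real (r n) / sqrt (real n))"
        unfolding Yf1 using S.measure_zero[OF sigma_meas z e] by simp
    qed
  next
    case False
    have s2p: "?s2 > 0" using False by (simp add: order_le_neq_trans)
    let ?kap = "sqrt ?cp * ?s2\<^sup>2"
    have kap: "?kap > 0" using cp s2p by simp
    show ?thesis
    proof (intro exI allI impI)
      fix n and C :: "real^'s" assume C1: "norm C = 1"
      then have C: "C \<noteq> 0" by auto
      let ?tau = "tau M (Z 0) (\<lambda>\<omega>. Y 0 \<omega> - m1 (X 0 \<omega>)) C"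
      let ?D = "sqrt (real n) * sd p ?tau"
      have D0: "?D \<ge> 0" unfolding sd_abs by (intro mult_nonneg_nonneg) (use cp in auto)
      have Dlb: "n > 0 \<and> ?kap * sqrt (real n) \<le> ?D" if Dnz: "?D \<noteq> 0"
      proof
        show "n > 0" using Dnz by (cases n) auto
        have tnz: "?tau \<noteq> 0" using Dnz unfolding sd_def by auto
        have "?s2\<^sup>2 \<le> ?tau"
          unfolding tau_def Yf0
          by (rule tau_lb[OF M _ xi2]) (use tnz in \<open>simp_all add: tau_def Yf0\<close>)
        then have "?s2\<^sup>2 \<le> \<bar>?tau\<bar>" by simp
        then have "?kap \<le> sd p ?tau" unfolding sd_abs using cp by (intro mult_left_mono) auto
        then show "?kap * sqrt (real n) \<le> ?D" by (simp add: mult.commute mult_left_mono)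
      qed
      have "?mu e n C \<le> 2 * B0 * real p * real p * ?E2 / (e * ?kap) * (real (r n) / sqrt (real n))"
        unfolding Yf1
        by (rule S.measure_bound[OF densZ _ B0 eps_var e C kap D0 Dlb]) (use p_ge in auto)
      then show "?mu e n C \<le> 2 * B0 * real p * real p * ?E2 / (e * ?kap) * (real (r n) / sqrt (real n))" .
    qed
  qed
  have rlim: "(\<lambda>n. real (r n) / sqrt (real n)) \<longlonglongrightarrow> 0"
    by (rule r_over_sqrt[OF b_rate r_rate])
  show ?thesis
  proof (intro allI impI)
    fix e :: real assume e: "e > 0"
    obtain K where K: "\<And>n C. norm C = 1 \<Longrightarrow> ?mu e n C \<le> K * (real (r n) / sqrt (real n))"
      using bound[OF e] by blast
    obtain i :: 's where True by blast
    let ?C0 = "axis i (1::real) :: real^'s"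
    have C0: "?C0 \<in> {C::real^'s. norm C = 1}" by simp
    have ne: "{C::real^'s. norm C = 1} \<noteq> {}" using C0 by blast
    have bdd: "bdd_above ((\<lambda>C. ?mu e n C) ` {C::real^'s. norm C = 1})" for n
      by (intro bdd_aboveI[where M=1]) (auto simp: S.prob_le_1)
    have up: "(SUP C\<in>{C::real^'s. norm C = 1}. ?mu e n C) \<le> K * (real (r n) / sqrt (real n))" for n
      by (rule cSUP_least[OF ne]) (use K in auto)
    have lo: "0 \<le> (SUP C\<in>{C::real^'s. norm C = 1}. ?mu e n C)" for n
    proof -
      have "0 \<le> ?mu e n ?C0" by simp
      also have "\<dots> \<le> (SUP C\<in>{C::real^'s. norm C = 1}. ?mu e n C)"
        by (rule cSUP_upper[OF C0 bdd])
      finally show ?thesis .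
    qed
    have "(\<lambda>n. K * (real (r n) / sqrt (real n))) \<longlonglongrightarrow> K * 0"
      by (intro tendsto_mult tendsto_const rlim)
    then have g0: "(\<lambda>n. K * (real (r n) / sqrt (real n))) \<longlonglongrightarrow> 0" by simp
    have ev1: "\<forall>\<^sub>F n in sequentially. 0 \<le> (SUP C\<in>{C::real^'s. norm C = 1}. ?mu e n C)"
      using lo by (intro always_eventually allI)
    have ev2: "\<forall>\<^sub>F n in sequentially. (SUP C\<in>{C::real^'s. norm C = 1}. ?mu e n C) \<le> K * (real (r n) / sqrt (real n))"
      using up by (intro always_eventually allI)
    show "(\<lambda>n. SUP C\<in>{C::real^'s. norm C = 1}. ?mu e n C) \<longlonglongrightarrow> 0"
      by (rule tendsto_sandwich[OF ev1 ev2 tendsto_const g0])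
  qed
qed

end
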